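(* Let $I$ be a fuzzy implication function, $T$ a t-norm and $j\in\{1,\dots,n_c\}$. Suppose $I$ satisfies the monotonicity of the generalized modus ponens with respect to $T$, i.e. $T(\tilde x,I(\tilde x,y))\le T(x,I(x,y))$ for all $x,\tilde x,y\in[0,1]$ with $\tilde x\le x$. Then for all $R^{S,L}_j,R^{\tilde S,\tilde L}_j\in\mathcal{R}^{I,T}_j$ with $R^{S,L}_j\prec R^{\tilde S,\tilde L}_j$ and all $E^d\in E$, $$\mu_{eval}^{R^{\tilde S,\tilde L}_j,E^d}\le\mu_{eval}^{R^{S,L}_j,E^d},$$ and consequently $\sum_{d=1}^{n_e}\mu_{eval}^{R^{\tilde S,\tilde L}_j,E^d}\le\sum_{d=1}^{n_e}\mu_{eval}^{R^{S,L}_j,E^d}$.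
   Context: A fuzzy implication function is a map $I:[0,1]^2\to[0,1]$ decreasing in the first variable, increasing in the second, with $I(0,0)=I(1,1)=1$, $I(1,0)=0$. A t-norm is a commutative, associative, increasing binary operation on $[0,1]$ with neutral element $1$. Setting: features $X_1,\dots,X_{n_f}$ with domains $D_m\subseteq\mathbb{R}$, target $Y$ with domain $D_Y$; examples $E=\{E^d=(e^d_1,\dots,e^d_{n_f},y^d):d=1,\dots,n_e\}$; each feature $X_m$ has labels $LL_m^1,\dots,LL_m^{l_m}$ with membership functions $\mu_{LL_m^n}:D_m\to[0,1]$; classes $\mathrm{Class}_1,\dots,\mathrm{Class}_{n_c}$ with $\mu_{\mathrm{Class}_j}:D_Y\to[0,1]$. A rule $R^{S,L}_j$ is given by a class index $j$, a set of features $S=\{X_{m_1},\dots,X_{m_s}\}$ and a set $L$ of labels containing exactly one label $LL^{n_{m_i}}_{m_i}$ per feature in $S$. $\mathcal{R}^{I,T}_j$ is the set of such rules with class $j$, evaluated with $T$ and $I$. For an example $E^d$: $\mu_{ant}^{R^{S,L}_j,E^d}=T(\mu_{LL^{n_{m_1}}_{m_1}}(e^d_{m_1}),\dots,\mu_{LL^{n_{m_s}}_{m_s}}(e^d_{m_s}))$, $\mu_{con}^{R^{S,L}_j,E^d}=\mu_{\mathrm{Class}_j}(y^d)$, $\mu_{eval}^{R^{S,L}_j,E^d}=T\big(\mu_{ant}^{R^{S,L}_j,E^d},I(\mu_{ant}^{R^{S,L}_j,E^d},\mu_{con}^{R^{S,L}_j,E^d})\big)$. $R^{\tilde S,\tilde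 L}_{\tilde j}$ is a refinement of $R^{S,L}_j$, written $R^{S,L}_j\prec R^{\tilde S,\tilde L}_{\tilde j}$, iff $\tilde j=j$, $S\subsetneq\tilde S$, and every label of $L$ belongs to $\tilde L$. *)

theory Defs
  imports Complex_Main
begin

definition fuzzy_implication :: "(real \<Rightarrow> real \<Rightarrow> real) \<Rightarrow> bool" where
  "fuzzy_implication I \<longleftrightarrow>
     (\<forall>x y. 0 \<le> x \<and> x \<le> 1 \<and> 0 \<le> y \<and> y \<le> 1 \<longrightarrow> 0 \<le> I x y \<and> I x y \<le> 1) \<and>
     (\<forall>x1 x2 y. 0 \<le> x1 \<and> x1 \<le> x2 \<and> x2 \<le> 1 \<and> 0 \<le> y \<and> y \<le> 1 \<longrightarrow> I x2 y \<le> I x1 y) \<and>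
     (\<forall>x y1 y2. 0 \<le> x \<and> x \<le> 1 \<and> 0 \<le> y1 \<and> y1 \<le> y2 \<and> y2 \<le> 1 \<longrightarrow> I x y1 \<le> I x y2) \<and>
     I 0 0 = 1 \<and> I 1 1 = 1 \<and> I 1 0 = 0"

definition tnorm :: "(real \<Rightarrow> real \<Rightarrow> real) \<Rightarrow> bool" where
  "tnorm T \<longleftrightarrow>
     (\<forall>x y. 0 \<le> x \<and> x \<le> 1 \<and> 0 \<le> y \<and> y \<le> 1 \<longrightarrow> 0 \<le> T x y \<and> T x y \<le> 1) \<and>
     (\<forall>x y. 0 \<le> x \<and> x \<le> 1 \<and> 0 \<le> y \<and> y \<le> 1 \<longrightarrow> T x y = T y x) \<and>
     (\<forall>x y z. 0 \<le> x \<and> x \<le> 1 \<and> 0 \<le> y \<and> y \<le> 1 \<and> 0 \<le> z \<and> z \<le> 1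
        \<longrightarrow> T x (T y z) = T (T x y) z) \<and>
     (\<forall>x1 x2 y1 y2. 0 \<le> x1 \<and> x1 \<le> x2 \<and> x2 \<le> 1 \<and> 0 \<le> y1 \<and> y1 \<le> y2 \<and> y2 \<le> 1
        \<longrightarrow> T x1 y1 \<le> T x2 y2) \<and>
     (\<forall>x. 0 \<le> x \<and> x \<le> 1 \<longrightarrow> T x 1 = x)"

definition mono_GMP :: "(real \<Rightarrow> real \<Rightarrow> real) \<Rightarrow> (real \<Rightarrow> real \<Rightarrow> real) \<Rightarrow> bool" where
  "mono_GMP I T \<longleftrightarrow> (\<forall>x xt y. 0 \<le> xt \<and> xt \<le> x \<and> x \<le> 1 \<and> 0 \<le> y \<and> y \<le> 1
       \<longrightarrow> T xt (I xt y) \<le> T x (I x y))"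

text \<open>A rule with class index j, feature set S (feature indices in 1..nf) and a set L of
  labels, each label given as a pair (m, n) meaning LL_m^n; exactly one label per feature in S.\<close>
definition is_rule :: "nat \<Rightarrow> (nat \<Rightarrow> nat) \<Rightarrow> nat \<Rightarrow> nat \<Rightarrow> nat set \<Rightarrow> (nat \<times> nat) set \<Rightarrow> bool" where
  "is_rule nf l nc j S L \<longleftrightarrow> j \<in> {1..nc} \<and> S \<subseteq> {1..nf} \<and> L \<subseteq> S \<times> UNIV \<and>
     (\<forall>m\<in>S. \<exists>!n. (m, n) \<in> L) \<and> (\<forall>(m, n)\<in>L. n \<in> {1..l m})"

definition refines :: "nat \<Rightarrow> nat set \<Rightarrow> (nat \<times> nat) set \<Rightarrow> nat \<Rightarrow> nat set \<Rightarrow> (nat \<times> nat) set \<Rightarrow> bool" where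
  "refines j S L jt St Lt \<longleftrightarrow> jt = j \<and> S \<subset> St \<and> L \<subseteq> Lt"

definition rule_label :: "(nat \<times> nat) set \<Rightarrow> nat \<Rightarrow> nat" where
  "rule_label L m = (THE n. (m, n) \<in> L)"

definition mu_ant :: "(real \<Rightarrow> real \<Rightarrow> real) \<Rightarrow> (nat \<Rightarrow> nat \<Rightarrow> real \<Rightarrow> real)
     \<Rightarrow> nat set \<Rightarrow> (nat \<times> nat) set \<Rightarrow> (nat \<Rightarrow> real) \<Rightarrow> real" where
  "mu_ant T mu S L x = foldr T (map (\<lambda>m. mu m (rule_label L m) (x m)) (sorted_list_of_set S)) 1"

definition mu_eval :: "(real \<Rightarrow> real \<Rightarrow> real) \<Rightarrow> (real \<Rightarrow> real \<Rightarrow> real) \<Rightarrow> (nat \<Rightarrow> nat \<Rightarrow> real \<Rightarrow> real)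
     \<Rightarrow> (nat \<Rightarrow> 'y \<Rightarrow> real) \<Rightarrow> nat \<Rightarrow> nat set \<Rightarrow> (nat \<times> nat) set \<Rightarrow> (nat \<Rightarrow> real) \<Rightarrow> 'y \<Rightarrow> real" where
  "mu_eval T I mu muC j S L x yv =
     (let a = mu_ant T mu S L x in T a (I a (muC j yv)))"

end

theory Submission
  imports Defs
begin

lemma fold_range:
  assumes T: "tnorm T" and "\<forall>x\<in>set xs. 0 \<le> x \<and> x \<le> 1" and "0 \<le> b" "b \<le> 1"
  shows "0 \<le> foldr T xs b \<and> foldr T xs b \<le> 1"
  using assms(2-) by (induction xs) (use T in \<open>auto simp: tnorm_def\<close>)

lemma fold_mono:
  assumes T: "tnorm T" and "\<forall>x\<in>set xs. 0 \<le> x \<and> x \<le> 1" and "0 \<le> b" "b \<le> b'" "b' \<le> 1"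
  shows "foldr T xs b \<le> foldr T xs b'"
  using assms(2-)
proof (induction xs)
  case Nil then show ?case by simp
next
  case (Cons x xs)
  have r1: "0 \<le> foldr T xs b \<and> foldr T xs b \<le> 1" using fold_range[OF T, of xs b] Cons.prems by auto
  have r2: "0 \<le> foldr T xs b' \<and> foldr T xs b' \<le> 1" using fold_range[OF T, of xs b'] Cons.prems by auto
  have "foldr T xs b \<le> foldr T xs b'" using Cons by auto
  moreover have "0 \<le> x \<and> x \<le> 1" using Cons.prems by simp
  moreover have "\<And>x1 x2 y1 y2. 0 \<le> x1 \<and> x1 \<le> x2 \<and> x2 \<le> 1 \<and> 0 \<le> y1 \<and> y1 \<le> y2 \<and> y2 \<le> 1 \<Longrightarrow> T x1 y1 \<le> T x2 y2"
    using T unfolding tnorm_def by blast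
  ultimately show ?case using r1 r2 by simp
qed

lemma fold_remove:
  assumes T: "tnorm T" and "\<forall>x\<in>set ms. 0 \<le> f x \<and> f x \<le> 1" and "0 \<le> b" "b \<le> 1" and "a \<in> set ms"
  shows "foldr T (map f ms) b = T (f a) (foldr T (map f (remove1 a ms)) b)"
  using assms(2-)
proof (induction ms)
  case Nil then show ?case by simp
next
  case (Cons x xs)
  show ?case
  proof (cases "x = a")
    case True then show ?thesis by simp
  next
    case False
    then have a: "a \<in> set xs" using Cons by auto
    have r: "0 \<le> foldr T (map f (remove1 a xs)) b \<and> foldr T (map f (remove1 a xs)) b \<le> 1"
      using fold_range[OF T, of "map f (remove1 a xs)" b] Cons.prems by (auto dest: in_set_remove1 notin_set_remove1)
    have ax: "0 \<le> f a \<and> f a \<le> 1" "0 \<le> f x \<and> f x \<le> 1" using Cons.prems a by auto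
    have comm: "\<And>u v. 0 \<le> u \<and> u \<le> 1 \<Longrightarrow> 0 \<le> v \<and> v \<le> 1 \<Longrightarrow> T u v = T v u"
      using T unfolding tnorm_def by blast
    have assoc: "\<And>u v w. 0 \<le> u \<and> u \<le> 1 \<Longrightarrow> 0 \<le> v \<and> v \<le> 1 \<Longrightarrow> 0 \<le> w \<and> w \<le> 1 \<Longrightarrow> T u (T v w) = T (T u v) w"
      using T unfolding tnorm_def by blast
    have "foldr T (map f (x#xs)) b = T (f x) (T (f a) (foldr T (map f (remove1 a xs)) b))" using Cons a by simp
    also have "\<dots> = T (T (f x) (f a)) (foldr T (map f (remove1 a xs)) b)" using assoc[OF ax(2) ax(1) r] by simp
    also have "\<dots> = T (T (f a) (f x)) (foldr T (map f (remove1 a xs)) b)" using comm[OF ax(2) ax(1)] by simp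
    also have "\<dots> = T (f a) (T (f x) (foldr T (map f (remove1 a xs)) b))" using assoc[OF ax(1) ax(2) r] by simp
    finally show ?thesis using False by simp
  qed
qed

lemma fold_perm:
  assumes T: "tnorm T" and "\<forall>x\<in>set xs. 0 \<le> f x \<and> f x \<le> 1" and "0 \<le> b" "b \<le> 1"
    and "distinct xs" "distinct ys" "set xs = set ys"
  shows "foldr T (map f xs) b = foldr T (map f ys) b"
  using assms(2-)
proof (induction xs arbitrary: ys)
  case Nil then show ?case by simp
next
  case (Cons x xs)
  have "foldr T (map f ys) b = T (f x) (foldr T (map f (remove1 x ys)) b)"
    by (rule fold_remove[OF T]) (use Cons.prems in auto)
  moreover have "foldr T (map f xs) b = foldr T (map f (remove1 x ys)) b"
    using Cons.prems by (intro Cons.IH) (auto simp: set_remove1_eq)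
  ultimately show ?case by simp
qed
theorem proposition4:
  fixes I T :: "real \<Rightarrow> real \<Rightarrow> real"
    and nf nc ne :: nat and l :: "nat \<Rightarrow> nat"
    and D :: "nat \<Rightarrow> real set" and DY :: "'y set"
    and mu :: "nat \<Rightarrow> nat \<Rightarrow> real \<Rightarrow> real" and muC :: "nat \<Rightarrow> 'y \<Rightarrow> real"
    and e :: "nat \<Rightarrow> nat \<Rightarrow> real" and y :: "nat \<Rightarrow> 'y"
    and j :: nat and S St :: "nat set" and L Lt :: "(nat \<times> nat) set"
  assumes I: "fuzzy_implication I"
    and T: "tnorm T"
    and GMP: "mono_GMP I T"
    and j: "j \<in> {1..nc}"
    and mu_range: "\<And>m n v. m \<in> {1..nf} \<Longrightarrow> n \<in> {1..l m} \<Longrightarrow> v \<in> D m \<Longrightarrow> 0 \<le> mu m n v \<and> mu m n v \<le> 1"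
    and muC_range: "\<And>k v. k \<in> {1..nc} \<Longrightarrow> v \<in> DY \<Longrightarrow> 0 \<le> muC k v \<and> muC k v \<le> 1"
    and e_dom: "\<And>d m. d \<in> {1..ne} \<Longrightarrow> m \<in> {1..nf} \<Longrightarrow> e d m \<in> D m"
    and y_dom: "\<And>d. d \<in> {1..ne} \<Longrightarrow> y d \<in> DY"
    and R: "is_rule nf l nc j S L"
    and Rt: "is_rule nf l nc j St Lt"
    and ref: "refines j S L j St Lt"
  shows "(\<forall>d\<in>{1..ne}. mu_eval T I mu muC j St Lt (e d) (y d) \<le> mu_eval T I mu muC j S L (e d) (y d))
       \<and> (\<Sum>d=1..ne. mu_eval T I mu muC j St Lt (e d) (y d)) \<le> (\<Sum>d=1..ne. mu_eval T I mu muC j S L (e d) (y d))"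
proof -
  have fS: "finite S" and fSt: "finite St" using R Rt unfolding is_rule_def by (auto intro: finite_subset)
  have sub: "S \<subseteq> St" using ref unfolding refines_def by auto
  have Ruq: "\<forall>m\<in>S. \<exists>!n. (m,n)\<in>L" using R unfolding is_rule_def by (elim conjE) assumption
  have Rtuq: "\<forall>m\<in>St. \<exists>!n. (m,n)\<in>Lt" using Rt unfolding is_rule_def by (elim conjE) assumption
  have Rtl: "\<forall>(m, n)\<in>Lt. n \<in> {1..l m}" using Rt unfolding is_rule_def by (elim conjE) assumption
  have LLt: "L \<subseteq> Lt" using ref unfolding refines_def by (elim conjE) assumption
  have lab: "rule_label Lt m = rule_label L m" if "m \<in> S" for m
  proof -
    have u1: "\<exists>!n. (m,n)\<in>L" using Ruq that by (rule bspec)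
    have u2: "\<exists>!n. (m,n)\<in>Lt" using Rtuq sub that by blast
    obtain n where n: "(m, n) \<in> L" using u1 by blast
    have "(m, n) \<in> Lt" using n LLt by blast
    then have "rule_label Lt m = n" unfolding rule_label_def using u2 by (rule the1_equality[rotated])
    moreover have "rule_label L m = n" unfolding rule_label_def using u1 n by (rule the1_equality)
    ultimately show ?thesis by simp
  qed
  have labin: "rule_label Lt m \<in> {1..l m}" if "m \<in> St" for m
  proof -
    have u2: "\<exists>!n. (m,n)\<in>Lt" using Rtuq that by blast
    obtain n2 where n2: "(m, n2) \<in> Lt" using u2 by blast
    have "rule_label Lt m = n2" unfolding rule_label_def using u2 n2 by (rule the1_equality)
    moreover have "n2 \<in> {1..l m}" using Rtl n2 by blast
    ultimately show ?thesis by simp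
  qed
  have Stnf: "St \<subseteq> {1..nf}" using Rt unfolding is_rule_def by auto
  have main: "mu_eval T I mu muC j St Lt (e d) (y d) \<le> mu_eval T I mu muC j S L (e d) (y d)"
    if d: "d \<in> {1..ne}" for d
  proof -
    define f where "f m = mu m (rule_label Lt m) (e d m)" for m
    have frange: "0 \<le> f m \<and> f m \<le> 1" if "m \<in> St" for m
      unfolding f_def using mu_range[of m "rule_label Lt m" "e d m"] labin[OF that] e_dom[OF d] Stnf that by auto
    have aS: "mu_ant T mu S L (e d) = foldr T (map f (sorted_list_of_set S)) 1"
      unfolding mu_ant_def f_def using lab fS by (intro arg_cong2[where f="foldr T"]) auto
    have aSt: "mu_ant T mu St Lt (e d) = foldr T (map f (sorted_list_of_set St)) 1"
      unfolding mu_ant_def f_def by simp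
    let ?xs = "sorted_list_of_set S @ sorted_list_of_set (St - S)"
    have "foldr T (map f (sorted_list_of_set St)) 1 = foldr T (map f ?xs) 1"
      by (rule fold_perm[OF T]) (use frange fSt fS sub in auto)
    also have "\<dots> = foldr T (map f (sorted_list_of_set S)) (foldr T (map f (sorted_list_of_set (St - S))) 1)"
      by simp
    also have "\<dots> \<le> foldr T (map f (sorted_list_of_set S)) 1"
      apply (rule fold_mono[OF T])
      using frange fS sub fold_range[OF T, of "map f (sorted_list_of_set (St - S))" 1] fSt by auto
    finally have le: "mu_ant T mu St Lt (e d) \<le> mu_ant T mu S L (e d)" using aS aSt by simp
    have r: "0 \<le> mu_ant T mu St Lt (e d) \<and> mu_ant T mu St Lt (e d) \<le> 1"
      unfolding aSt by (rule fold_range[OF T]) (use frange fSt in auto)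
    have r2: "0 \<le> mu_ant T mu S L (e d) \<and> mu_ant T mu S L (e d) \<le> 1"
      unfolding aS by (rule fold_range[OF T]) (use frange fS sub in auto)
    have c: "0 \<le> muC j (y d) \<and> muC j (y d) \<le> 1" using muC_range[OF j y_dom[OF d]] .
    have g: "\<And>x xt yy. 0 \<le> xt \<and> xt \<le> x \<and> x \<le> 1 \<and> 0 \<le> yy \<and> yy \<le> 1 \<Longrightarrow> T xt (I xt yy) \<le> T x (I x yy)"
      using GMP unfolding mono_GMP_def by blast
    show ?thesis unfolding mu_eval_def Let_def using g le r r2 c by simp
  qed
  show ?thesis using main by (auto intro: sum_mono)
qed

end
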